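(* Let $S=\{a_i \bmod d_i : 1\le i\le r\}$ be an exact covering system and $G_S$ its exact covering system digraph, with predecessor function $P$. Then for every $n\in\mathbb{Z}$ there is an ancestor $m$ of $n$ such that $|P(m)|\ge |m|$. Moreover, if the degree $r$ of $G_S$ is at least $2$, there exists $N\in\mathbb{N}$ such that for every $m\in\mathbb{Z}$ with $|P(m)|\ge|m|$ we have $|m|\le N$.
   Context: A system of congruences $S=\{a_i \bmod d_i : 1\le i\le r\}$ with integers $a_i$ and nonzero integers $d_i$ (negative $d_i$ allowed; $n\equiv a \bmod -d$ means $n\equiv a\bmod d$) is an exact covering system if every integer satisfies exactly one of the congruences; congruences are distinguished by their chosen representatives $a_i$. The exact covering system digraph $G_S$ has vertex set $\mathbb{Z}$ and edges $(n,d_in+a_i)$ for all $n\in\mathbb{Z}$, $1\le i\le r$; $r$ is its degree. Every vertex has indegree exactly one, and the predecessor $P(n)$ is the unique integer with $(P(n),n)$ an edge. $P^k$ denotes the $k$-fold composition; $m$ is an ancestor of $n$ if $m=P^k(n)$ for some $k\in\mathbb{N}$. *)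

theory Defs
  imports Main
begin

text \<open>A system of congruences is a list of pairs (a_i, d_i), i < r = length S.
  Congruences are distinguished by their index (hence a list, not a set).\<close>

definition exact_covering_system :: "(int \<times> int) list \<Rightarrow> bool" where
  "exact_covering_system S \<longleftrightarrow>
     (\<forall>i<length S. snd (S ! i) \<noteq> 0) \<and>
     (\<forall>n::int. \<exists>!i. i < length S \<and> snd (S ! i) dvd (n - fst (S ! i)))"

definition ecs_edge :: "(int \<times> int) list \<Rightarrow> int \<Rightarrow> int \<Rightarrow> bool" where
  "ecs_edge S n m \<longleftrightarrow> (\<exists>i<length S. m = snd (S ! i) * n + fst (S ! i))"

definition ecs_pred :: "(int \<times> int) list \<Rightarrow> int \<Rightarrow> int" where
  "ecs_pred S n = (THE p. ecs_edge S p n)"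

definition ecs_ancestor :: "(int \<times> int) list \<Rightarrow> int \<Rightarrow> int \<Rightarrow> bool" where
  "ecs_ancestor S m n \<longleftrightarrow> (\<exists>k::nat. m = (ecs_pred S ^^ k) n)"

end

theory Submission
  imports Defs
begin

lemma ecs_exists:
  assumes "exact_covering_system S"
  shows "\<exists>i<length S. snd (S ! i) dvd (n - fst (S ! i))"
  using assms unfolding exact_covering_system_def by blast

lemma ecs_pred_eq:
  assumes e: "exact_covering_system S" and i: "i < length S"
    and dv: "snd (S ! i) dvd (n - fst (S ! i))"
  shows "ecs_pred S n = (n - fst (S ! i)) div snd (S ! i)"
  unfolding ecs_pred_def
proof (rule the_equality)
  show "ecs_edge S ((n - fst (S ! i)) div snd (S ! i)) n"
    unfolding ecs_edge_def using i dv by (intro exI[of _ i]) auto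
next
  fix p assume "ecs_edge S p n"
  then obtain j where j: "j < length S" "n = snd (S ! j) * p + fst (S ! j)"
    unfolding ecs_edge_def by blast
  have "snd (S ! j) dvd (n - fst (S ! j))" using j by simp
  with e i dv j(1) have "j = i" unfolding exact_covering_system_def by blast
  moreover have "snd (S ! i) \<noteq> 0" using e i unfolding exact_covering_system_def by blast
  ultimately show "p = (n - fst (S ! i)) div snd (S ! i)" using j by simp
qed

lemma ecs_pred_rel:
  assumes e: "exact_covering_system S"
  shows "\<exists>i<length S. n = snd (S ! i) * ecs_pred S n + fst (S ! i)"
proof -
  obtain i where i: "i < length S" "snd (S ! i) dvd (n - fst (S ! i))"
    using ecs_exists[OF e] by blast
  have "ecs_pred S n = (n - fst (S ! i)) div snd (S ! i)" using ecs_pred_eq[OF e i] .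
  then have "n = snd (S ! i) * ecs_pred S n + fst (S ! i)" using i(2) by simp
  then show ?thesis using i(1) by blast
qed

lemma ecs_d_ge2:
  assumes e: "exact_covering_system S" and l: "length S \<ge> 2" and i: "i < length S"
  shows "\<bar>snd (S ! i)\<bar> \<ge> 2"
proof (rule ccontr)
  assume "\<not> ?thesis"
  moreover have "snd (S ! i) \<noteq> 0" using e i unfolding exact_covering_system_def by blast
  ultimately have "\<bar>snd (S ! i)\<bar> = 1" by linarith
  then have u: "snd (S ! i) = 1 \<or> snd (S ! i) = -1" by linarith
  define j where "j = (if i = 0 then 1 else (0::nat))"
  have j: "j < length S" "j \<noteq> i" using l i unfolding j_def by auto
  let ?n = "fst (S ! j)"
  have "snd (S ! j) dvd (?n - fst (S ! j))" by simp
  moreover have "snd (S ! i) dvd (?n - fst (S ! i))" using u by auto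
  ultimately show False using e i j unfolding exact_covering_system_def by blast
qed

lemma part1:
  assumes e: "exact_covering_system S"
  shows "\<exists>k. \<bar>ecs_pred S ((ecs_pred S ^^ k) n)\<bar> \<ge> \<bar>(ecs_pred S ^^ k) n\<bar>"
proof (induction "nat \<bar>n\<bar>" arbitrary: n rule: less_induct)
  case less
  show ?case
  proof (cases "\<bar>ecs_pred S n\<bar> \<ge> \<bar>n\<bar>")
    case True
    then show ?thesis by (intro exI[of _ 0]) simp
  next
    case False
    then have "nat \<bar>ecs_pred S n\<bar> < nat \<bar>n\<bar>" by simp
    from less[OF this] obtain k where
      "\<bar>ecs_pred S ((ecs_pred S ^^ k) (ecs_pred S n))\<bar> \<ge> \<bar>(ecs_pred S ^^ k) (ecs_pred S n)\<bar>"
      by blast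
    then show ?thesis by (intro exI[of _ "Suc k"]) (simp only: funpow_Suc_right o_apply)
  qed
qed

theorem mainTheorem4:
  fixes S :: "(int \<times> int) list"
  assumes "exact_covering_system S"
  shows "(\<forall>n::int. \<exists>m. ecs_ancestor S m n \<and> \<bar>ecs_pred S m\<bar> \<ge> \<bar>m\<bar>)
         \<and> (length S \<ge> 2 \<longrightarrow>
              (\<exists>N::nat. \<forall>m::int. \<bar>ecs_pred S m\<bar> \<ge> \<bar>m\<bar> \<longrightarrow> \<bar>m\<bar> \<le> int N))"
proof (intro conjI allI impI)
  fix n :: int
  obtain k where "\<bar>ecs_pred S ((ecs_pred S ^^ k) n)\<bar> \<ge> \<bar>(ecs_pred S ^^ k) n\<bar>"
    using part1[OF assms] by blast
  then show "\<exists>m. ecs_ancestor S m n \<and> \<bar>ecs_pred S m\<bar> \<ge> \<bar>m\<bar>"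
    unfolding ecs_ancestor_def by blast
next
  assume l: "length S \<ge> 2"
  define N where "N = sum_list (map (\<lambda>x. nat \<bar>fst x\<bar>) S)"
  show "\<exists>N::nat. \<forall>m::int. \<bar>ecs_pred S m\<bar> \<ge> \<bar>m\<bar> \<longrightarrow> \<bar>m\<bar> \<le> int N"
  proof (intro exI[of _ N] allI impI)
    fix m :: int
    assume h: "\<bar>ecs_pred S m\<bar> \<ge> \<bar>m\<bar>"
    obtain i where i: "i < length S" "m = snd (S ! i) * ecs_pred S m + fst (S ! i)"
      using ecs_pred_rel[OF assms] by blast
    have d2: "\<bar>snd (S ! i)\<bar> \<ge> 2" using ecs_d_ge2[OF assms l i(1)] .
    have "\<bar>m - fst (S ! i)\<bar> = \<bar>snd (S ! i)\<bar> * \<bar>ecs_pred S m\<bar>"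
    proof -
      have "m - fst (S ! i) = snd (S ! i) * ecs_pred S m" using i(2) by simp
      then show ?thesis by (simp add: abs_mult)
    qed
    also have "\<dots> \<ge> 2 * \<bar>ecs_pred S m\<bar>" using d2 by (simp add: mult_right_mono)
    finally have "\<bar>m\<bar> \<le> \<bar>fst (S ! i)\<bar>" using h by linarith
    moreover have "nat \<bar>fst (S ! i)\<bar> \<le> N" unfolding N_def
      using i(1) by (intro member_le_sum_list) auto
    ultimately show "\<bar>m\<bar> \<le> int N" by linarith
  qed
qed

end
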